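(* Let $m\in\mathbb{N}^\ast$, $\theta>0$ and $\varphi\in\Gamma_1$. Let $(v_i)_{i\ge1}$ be a sequence of positive real numbers with $\sum_{i\ge1}v_i<\infty$. Let $G_1,\dots,G_m$ be random variables with $\mathbb{E}[G_i]=0$ and $\mathrm{Var}[G_i]=v_i/(1+\theta)$, set $X_m=\psi(\varphi)+\sum_{i=1}^mG_ie_i$ and $w_m^{\mathrm{MZW}}(\cdot;\theta)=\psi^{-1}(X_m)$, i.e. $w_m^{\mathrm{MZW}}(t;\theta)=\frac{\int_0^t\varphi'(s)\exp(\sum_{i=1}^mG_ie_i(s))ds}{\int_0^1\varphi'(\tau)\exp(\sum_{i=1}^mG_ie_i(\tau))d\tau}$. Then $w_m^{\mathrm{MZW}}(\cdot;\theta)$ has a unique Fréchet mean in $\Gamma_1$ for the distance associated with $\langle\cdot,\cdot\rangle_{\Gamma_1}$, namely $\varphi$, i.e. $\varphi$ is the unique minimizer over $\check\varphi\in\Gamma_1$ of $\mathbb{E}[\|w_m^{\mathrm{MZW}}(\cdot;\theta)\ominus_{\Gamma_1}\check\varphi\|_{\Gamma_1}^2]$, and the associated Fréchet variance is $\mathbb{E}\big[\|w_m^{\mathrm{MZW}}(\cdot;\theta)\ominus_{\Gamma_1}\varphi\|_{\Gamma_1}^2\big]=\mathbb{E}\big[\|X_m-\psi(\varphi)\|^2\big]=\frac{1}{1+\theta}\sum_{i=1}^mv_i$, where $\|h\|^2=\int_0^1h^2$.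
   Context: $\Gamma_1$ is the set of functions $\gamma:[0,1]\to[0,1]$ with $\gamma(0)=0$, $\gamma(1)=1$, increasing, continuous, differentiable at every point of $[0,1]$, and such that there exist constants $0<m_\gamma<M_\gamma<\infty$ with $m_\gamma<\gamma'<M_\gamma$ on $[0,1]$. On $\Gamma_1$: $f\oplus_{\Gamma_1}g=\frac{\int_0^\cdot f'g'}{\int_0^1f'g'}$; $\alpha\odot_{\Gamma_1}f=\frac{\int_0^\cdot (f')^\alpha}{\int_0^1(f')^\alpha}$ for $\alpha\in\mathbb{R}$; $f\ominus_{\Gamma_1}g=f\oplus_{\Gamma_1}[(-1)\odot_{\Gamma_1}g]$; inner product $\langle f,g\rangle_{\Gamma_1}=\int_0^1\log f'\log g'-\int_0^1\log f'\int_0^1\log g'$, with norm $\|f\|_{\Gamma_1}^2=\langle f,f\rangle_{\Gamma_1}$. The map $\psi:\Gamma_1\to L^2([0,1])$ is $\psi(\varphi)=\log\varphi'-\int_0^1\log\varphi'$, with inverse on bounded mean-zero functions $\psi^{-1}(h)=\frac{\int_0^\cdot e^{h(s)}ds}{\int_0^1e^{h(\tau)}d\tau}$. $(e_i)_{i\ge1}$ denotes the Fourier orthonormal basis of $L^2([0,1])$ (functions $\sqrt2\cos(2\pi kt)$, $\sqrt2\sin(2\pi kt)$, $k\ge1$) with the constant function $1$ removed. *)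

theory Defs
  imports "HOL-Probability.Probability"
begin

definition gderiv :: "(real \<Rightarrow> real) \<Rightarrow> real \<Rightarrow> real" where
  "gderiv f t = vector_derivative f (at t within {0..1})"

definition Gamma1 :: "(real \<Rightarrow> real) set" where
  "Gamma1 = {\<gamma>. \<gamma> 0 = 0 \<and> \<gamma> 1 = 1 \<and> mono_on {0..1} \<gamma> \<and> continuous_on {0..1} \<gamma>
     \<and> (\<forall>t\<in>{0..1}. \<gamma> differentiable (at t within {0..1}))
     \<and> (\<exists>m M. 0 < m \<and> m < M \<and> (\<forall>t\<in>{0..1}. m < gderiv \<gamma> t \<and> gderiv \<gamma> t < M))}"

definition gplus :: "(real \<Rightarrow> real) \<Rightarrow> (real \<Rightarrow> real) \<Rightarrow> real \<Rightarrow> real" where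
  "gplus f g = (\<lambda>t. integral {0..t} (\<lambda>s. gderiv f s * gderiv g s)
                    / integral {0..1} (\<lambda>s. gderiv f s * gderiv g s))"

definition gscale :: "real \<Rightarrow> (real \<Rightarrow> real) \<Rightarrow> real \<Rightarrow> real" where
  "gscale \<alpha> f = (\<lambda>t. integral {0..t} (\<lambda>s. gderiv f s powr \<alpha>)
                    / integral {0..1} (\<lambda>s. gderiv f s powr \<alpha>))"

definition gminus :: "(real \<Rightarrow> real) \<Rightarrow> (real \<Rightarrow> real) \<Rightarrow> real \<Rightarrow> real" where
  "gminus f g = gplus f (gscale (-1) g)"

definition ginner :: "(real \<Rightarrow> real) \<Rightarrow> (real \<Rightarrow> real) \<Rightarrow> real" where
  "ginner f g = integral {0..1} (\<lambda>s. ln (gderiv f s) * ln (gderiv g s))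
      - integral {0..1} (\<lambda>s. ln (gderiv f s)) * integral {0..1} (\<lambda>s. ln (gderiv g s))"

definition gnorm_sq :: "(real \<Rightarrow> real) \<Rightarrow> real" where
  "gnorm_sq f = ginner f f"

definition psi :: "(real \<Rightarrow> real) \<Rightarrow> real \<Rightarrow> real" where
  "psi \<phi> = (\<lambda>t. ln (gderiv \<phi> t) - integral {0..1} (\<lambda>s. ln (gderiv \<phi> s)))"

definition psi_inv :: "(real \<Rightarrow> real) \<Rightarrow> real \<Rightarrow> real" where
  "psi_inv h = (\<lambda>t. integral {0..t} (\<lambda>s. exp (h s)) / integral {0..1} (\<lambda>s. exp (h s)))"

text \<open>Fourier basis without the constant: e_(2k-1) = sqrt 2 cos(2 pi k t),
  e_(2k) = sqrt 2 sin(2 pi k t), k >= 1.\<close>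
definition fourier_e :: "nat \<Rightarrow> real \<Rightarrow> real" where
  "fourier_e i t = (let k = real ((i + 1) div 2) in
     if odd i then sqrt 2 * cos (2 * pi * k * t) else sqrt 2 * sin (2 * pi * k * t))"

definition l2_norm_sq :: "(real \<Rightarrow> real) \<Rightarrow> real" where
  "l2_norm_sq h = integral {0..1} (\<lambda>s. (h s)\<^sup>2)"

definition Xm :: "(real \<Rightarrow> real) \<Rightarrow> (nat \<Rightarrow> 'a \<Rightarrow> real) \<Rightarrow> nat \<Rightarrow> 'a \<Rightarrow> real \<Rightarrow> real" where
  "Xm \<phi> G m \<omega> = (\<lambda>t. psi \<phi> t + (\<Sum>i=1..m. G i \<omega> * fourier_e i t))"

definition wMZW :: "(real \<Rightarrow> real) \<Rightarrow> (nat \<Rightarrow> 'a \<Rightarrow> real) \<Rightarrow> nat \<Rightarrow> 'a \<Rightarrow> real \<Rightarrow> real" where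
  "wMZW \<phi> G m \<omega> = (\<lambda>t.
     integral {0..t} (\<lambda>s. gderiv \<phi> s * exp (\<Sum>i=1..m. G i \<omega> * fourier_e i s))
   / integral {0..1} (\<lambda>s. gderiv \<phi> s * exp (\<Sum>i=1..m. G i \<omega> * fourier_e i s)))"

end

theory Submission
  imports Defs
begin

lemma ae_deriv_integral:
  fixes f :: "real \<Rightarrow> real"
  assumes fint: "f integrable_on {0..1}"
  obtains N where "negligible N"
    "\<And>t. t \<in> {0..1} - N \<Longrightarrow> ((\<lambda>t. integral {0..t} f) has_real_derivative f t) (at t within {0..1})"
proof -
  define f0 where "f0 x = (if x \<in> {0..1} then f x else 0)" for x :: real
  have f0U: "f0 integrable_on UNIV"
    unfolding f0_def using fint integrable_restrict_UNIV by blast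
  have f0c: "f0 integrable_on cbox a b" for a b
    using f0U integrable_on_subcbox by blast
  define f1 where "f1 x = f0 (- x)" for x :: real
  have f1c: "f1 integrable_on cbox a b" for a b
    using integrable_reflect[of f0 "-a" "-b"] f0c unfolding f1_def by simp
  obtain N1 where N1: "negligible N1" and N1p: "\<And>x e. \<lbrakk>x \<notin> N1; 0 < e\<rbrakk> \<Longrightarrow>
     \<exists>d>0. \<forall>h. 0 < h \<and> h < d \<longrightarrow> norm (integral (cbox x (x + h *\<^sub>R One)) f0 /\<^sub>R h ^ DIM(real) - f0 x) < e"
    using integrable_ccontinuous_explicit[of f0] f0c by blast
  obtain N2 where N2: "negligible N2" and N2p: "\<And>x e. \<lbrakk>x \<notin> N2; 0 < e\<rbrakk> \<Longrightarrow>
     \<exists>d>0. \<forall>h. 0 < h \<and> h < d \<longrightarrow> norm (integral (cbox x (x + h *\<^sub>R One)) f1 /\<^sub>R h ^ DIM(real) - f1 x) < e"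
    using integrable_ccontinuous_explicit[of f1] f1c by blast
  have R: "\<exists>d>0. \<forall>h. 0 < h \<and> h < d \<longrightarrow> \<bar>integral {x..x+h} f0 / h - f0 x\<bar> < e"
    if "x \<notin> N1" "0 < e" for x e
    using N1p[OF that] by (simp add: divide_inverse mult.commute)
  have L: "\<exists>d>0. \<forall>h. 0 < h \<and> h < d \<longrightarrow> \<bar>integral {x..x+h} f1 / h - f1 x\<bar> < e"
    if "x \<notin> N2" "0 < e" for x e
    using N2p[OF that] by (simp add: divide_inverse mult.commute)
  define N where "N = N1 \<union> uminus ` N2 \<union> {0,1}"
  have "negligible (uminus ` N2)"
    using N2 by (intro negligible_differentiable_image_negligible) (auto intro!: derivative_intros)
  then have negN: "negligible N"
    unfolding N_def using N1 by auto
  show ?thesis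
  proof (rule that[OF negN])
    fix t assume t: "t \<in> {0..1} - N"
    then have t01: "0 < t" "t < 1" and tN1: "t \<notin> N1" and tN2: "-t \<notin> N2"
      unfolding N_def by (auto simp: image_iff)
    show "((\<lambda>t. integral {0..t} f) has_real_derivative f t) (at t within {0..1})"
      unfolding has_field_derivative_iff Lim_within
    proof (intro allI impI)
      fix e :: real assume e: "0 < e"
      obtain d1 where d1: "d1 > 0" "\<And>h. 0 < h \<Longrightarrow> h < d1 \<Longrightarrow> \<bar>integral {t..t+h} f0 / h - f0 t\<bar> < e"
        using R[OF tN1 e] by blast
      obtain d2 where d2: "d2 > 0" "\<And>h. 0 < h \<Longrightarrow> h < d2 \<Longrightarrow> \<bar>integral {-t..-t+h} f1 / h - f1 (-t)\<bar> < e"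
        using L[OF tN2 e] by blast
      show "\<exists>\<delta>>0. \<forall>y\<in>{0..1}. 0 < dist y t \<and> dist y t < \<delta> \<longrightarrow>
              dist ((integral {0..y} f - integral {0..t} f) / (y - t)) (f t) < e"
      proof (intro exI[of _ "min d1 d2"] conjI ballI impI)
        show "0 < min d1 d2" using d1 d2 by simp
        fix y assume y: "y \<in> {0..1}" and yd: "0 < dist y t \<and> dist y t < min d1 d2"
        have ft: "f0 t = f t" "f1 (-t) = f t" using t01 by (auto simp: f0_def f1_def)
        show "dist ((integral {0..y} f - integral {0..t} f) / (y - t)) (f t) < e"
        proof (cases "y > t")
          case True
          have "integral {0..t} f + integral {t..y} f = integral {0..y} f"
            using t01 True y by (intro Henstock_Kurzweil_Integration.integral_combine integrable_on_subinterval[OF fint]) auto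
          moreover have "integral {t..y} f = integral {t..t+(y-t)} f0"
            using t01 y by (simp, intro integral_cong) (auto simp: f0_def)
          ultimately have "integral {0..y} f - integral {0..t} f = integral {t..t+(y-t)} f0"
            by linarith
          moreover have "\<bar>integral {t..t+(y-t)} f0 / (y-t) - f0 t\<bar> < e"
            using True yd by (intro d1(2)) (auto simp: dist_real_def)
          ultimately show ?thesis using ft by (simp add: dist_real_def)
        next
          case False
          then have yt: "y < t" using yd by auto
          have "integral {0..y} f + integral {y..t} f = integral {0..t} f"
            using t01 yt y by (intro Henstock_Kurzweil_Integration.integral_combine integrable_on_subinterval[OF fint]) auto
          moreover have "integral {y..t} f = integral {y..t} f0"
            using t01 y by (intro integral_cong) (auto simp: f0_def)
          moreover have "integral {-t..-t+(t-y)} f1 = integral {y..t} f0"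
            unfolding f1_def using integral_reflect_real[of t y f0] by simp
          ultimately have "integral {0..t} f - integral {0..y} f = integral {-t..-t+(t-y)} f1"
            by linarith
          moreover have "\<bar>integral {-t..-t+(t-y)} f1 / (t-y) - f1 (-t)\<bar> < e"
            using yt yd by (intro d2(2)) (auto simp: dist_real_def)
          moreover have "(integral {0..y} f - integral {0..t} f) / (y - t) = 
              (integral {0..t} f - integral {0..y} f) / (t - y)"
            using yt by (simp add: field_simps)
          ultimately show ?thesis using ft by (simp add: dist_real_def)
        qed
      qed
    qed
  qed
qed


lemma gderiv_integral_ae:
  fixes f :: "real \<Rightarrow> real"
  assumes fint: "f integrable_on {0..1}"
  obtains N where "negligible N"
    "\<And>t. t \<in> {0..1} - N \<Longrightarrow> gderiv (\<lambda>t. integral {0..t} f / c) t = f t / c"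
proof -
  obtain N where N: "negligible N"
    and D: "\<And>t. t \<in> {0..1} - N \<Longrightarrow> ((\<lambda>t. integral {0..t} f) has_real_derivative f t) (at t within {0..1})"
    using ae_deriv_integral[OF fint] by blast
  show ?thesis
  proof (rule that[OF N])
    fix t assume t: "t \<in> {0..1} - N"
    have "((\<lambda>t. integral {0..t} f / c) has_real_derivative f t / c) (at t within {0..1})"
      using D[OF t] by (rule DERIV_cdivide)
    then have "((\<lambda>t. integral {0..t} f / c) has_vector_derivative f t / c) (at t within cbox 0 1)"
      by (simp add: has_real_derivative_iff_has_vector_derivative)
    then show "gderiv (\<lambda>t. integral {0..t} f / c) t = f t / c"
      unfolding gderiv_def using t by (subst vector_derivative_within_cbox[symmetric]) auto
  qed
qed

lemma Gamma1_facts: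
  assumes "\<phi> \<in> Gamma1"
  obtains m0 M0 where "0 < m0" "\<And>t. t \<in> {0..1} \<Longrightarrow> m0 < gderiv \<phi> t \<and> gderiv \<phi> t < M0"
    and "\<And>t. t \<in> {0..1} \<Longrightarrow> (gderiv \<phi> has_integral \<phi> t) {0..t}"
    and "\<phi> 0 = 0" "\<phi> 1 = 1"
proof -
  have G: "\<phi> 0 = 0" "\<phi> 1 = 1" "\<forall>t\<in>{0..1}. \<phi> differentiable (at t within {0..1})"
    "\<exists>m M. 0 < m \<and> m < M \<and> (\<forall>t\<in>{0..1}. m < gderiv \<phi> t \<and> gderiv \<phi> t < M)"
    using assms unfolding Gamma1_def by auto
  obtain m0 M0 where mM: "0 < m0" "\<And>t. t \<in> {0..1} \<Longrightarrow> m0 < gderiv \<phi> t \<and> gderiv \<phi> t < M0"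
    using G(4) by blast
  have hd: "(\<phi> has_vector_derivative gderiv \<phi> x) (at x within {0..1})" if "x \<in> {0..1}" for x
    using G(3) that unfolding gderiv_def by (simp add: vector_derivative_works)
  have "(gderiv \<phi> has_integral \<phi> t) {0..t}" if t: "t \<in> {0..1}" for t
  proof -
    have "(gderiv \<phi> has_integral \<phi> t - \<phi> 0) {0..t}"
      using t by (intro fundamental_theorem_of_calculus) (auto intro!: has_vector_derivative_within_subset[OF hd])
    then show ?thesis using G by simp
  qed
  then show ?thesis using that mM G by blast
qed

definition bm :: "(real \<Rightarrow> real) \<Rightarrow> bool" where
  "bm f \<longleftrightarrow> f \<in> borel_measurable (lebesgue_on {0..1}) \<and> (\<exists>B. \<forall>x\<in>{0..1}. \<bar>f x\<bar> \<le> B)"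

lemma bm_integrable: "bm f \<Longrightarrow> f integrable_on {0..1}"
  unfolding bm_def
  by (elim conjE exE, rule measurable_bounded_by_integrable_imp_integrable_real) auto

lemma bm_integrable_sub: "bm f \<Longrightarrow> t \<in> {0..1} \<Longrightarrow> f integrable_on {0..t}"
  by (rule integrable_on_subinterval[OF bm_integrable]) auto

lemma bm_lebesgue: "bm f \<Longrightarrow> integrable (lebesgue_on {0..1}) f"
  unfolding bm_def
  by (elim conjE exE, rule measurable_bounded_by_integrable_imp_lebesgue_integrable) auto

lemma bm_cont: "continuous_on {0..1} f \<Longrightarrow> bm f"
proof -
  assume c: "continuous_on {0..1} f"
  have "compact (f ` {0..1})" using c by (intro compact_continuous_image) auto
  then have "bounded (f ` {0..1})" by (rule compact_imp_bounded)
  then show "bm f" unfolding bm_def bounded_real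
    using continuous_imp_measurable_on_sets_lebesgue[OF c] by auto
qed

lemma bm_const: "bm (\<lambda>x. c)"
  by (rule bm_cont) auto

lemma bm_add: "bm f \<Longrightarrow> bm g \<Longrightarrow> bm (\<lambda>x. f x + g x)"
  unfolding bm_def
proof (elim conjE exE, intro conjI)
  fix B1 B2 assume "\<forall>x\<in>{0..1}. \<bar>f x\<bar> \<le> B1" "\<forall>x\<in>{0..1}. \<bar>g x\<bar> \<le> B2"
  then show "\<exists>B. \<forall>x\<in>{0..1::real}. \<bar>f x + g x\<bar> \<le> B"
    by (intro exI[of _ "B1 + B2"]) (auto intro: order.trans[OF abs_triangle_ineq] add_mono)
qed auto

lemma bm_mult: "bm f \<Longrightarrow> bm g \<Longrightarrow> bm (\<lambda>x. f x * g x)"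
  unfolding bm_def
proof (elim conjE exE, intro conjI)
  fix B1 B2 assume "\<forall>x\<in>{0..1}. \<bar>f x\<bar> \<le> B1" "\<forall>x\<in>{0..1}. \<bar>g x\<bar> \<le> B2"
  then show "\<exists>B. \<forall>x\<in>{0..1::real}. \<bar>f x * g x\<bar> \<le> B"
  proof (intro exI[of _ "B1 * B2"] ballI)
    fix x :: real assume "x \<in> {0..1}"
    then have "\<bar>f x\<bar> \<le> B1" "\<bar>g x\<bar> \<le> B2" using \<open>\<forall>x\<in>{0..1}. \<bar>f x\<bar> \<le> B1\<close> \<open>\<forall>x\<in>{0..1}. \<bar>g x\<bar> \<le> B2\<close> by auto
    then show "\<bar>f x * g x\<bar> \<le> B1 * B2" unfolding abs_mult
      by (intro mult_mono) auto
  qed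
qed auto

lemma bm_uminus: "bm f \<Longrightarrow> bm (\<lambda>x. - f x)"
  unfolding bm_def by auto

lemma bm_diff: "bm f \<Longrightarrow> bm g \<Longrightarrow> bm (\<lambda>x. f x - g x)"
  using bm_add[of f "\<lambda>x. - g x"] bm_uminus[of g] by simp

lemma bm_sum: "finite I \<Longrightarrow> (\<And>i. i \<in> I \<Longrightarrow> bm (f i)) \<Longrightarrow> bm (\<lambda>x. \<Sum>i\<in>I. f i x)"
  by (induction I rule: finite_induct) (auto intro: bm_add bm_const)

lemma bm_ln:
  assumes "bm f" "0 < c" "\<And>x. x \<in> {0..1} \<Longrightarrow> c \<le> f x"
  shows "bm (\<lambda>x. ln (f x))"
proof -
  obtain B where B: "\<forall>x\<in>{0..1}. \<bar>f x\<bar> \<le> B" and m: "f \<in> borel_measurable (lebesgue_on {0..1})"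
    using assms(1) unfolding bm_def by auto
  have "\<bar>ln (f x)\<bar> \<le> \<bar>ln c\<bar> + \<bar>ln B\<bar>" if x: "x \<in> {0..1}" for x
  proof -
    have fx: "c \<le> f x" "f x \<le> B" using assms(3)[OF x] B x by (auto simp: abs_le_iff)
    have "ln c \<le> ln (f x)" "ln (f x) \<le> ln B" using fx assms(2) by auto
    then show ?thesis by linarith
  qed
  then show ?thesis unfolding bm_def using m
    by (intro conjI borel_measurable_ln exI[of _ "\<bar>ln c\<bar> + \<bar>ln B\<bar>"]) auto
qed

lemma bm_inverse:
  assumes "bm f" "0 < c" "\<And>x. x \<in> {0..1} \<Longrightarrow> c \<le> f x"
  shows "bm (\<lambda>x. 1 / f x)"
proof -
  have m: "f \<in> borel_measurable (lebesgue_on {0..1})"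
    using assms(1) unfolding bm_def by auto
  have "\<bar>1 / f x\<bar> \<le> 1 / c" if x: "x \<in> {0..1}" for x
    using assms(2) assms(3)[OF x] by (auto simp: divide_simps)
  moreover have "(\<lambda>x. 1 / f x) \<in> borel_measurable (lebesgue_on {0..1})"
    using borel_measurable_inverse[OF m] by (simp add: divide_inverse)
  ultimately show ?thesis unfolding bm_def by (intro conjI exI[of _ "1/c"]) auto
qed

lemma bm_gderiv:
  assumes "\<phi> \<in> Gamma1" shows "bm (gderiv \<phi>)"
proof -
  obtain m0 M0 where mM: "0 < m0" "\<And>t. t \<in> {0..1} \<Longrightarrow> m0 < gderiv \<phi> t \<and> gderiv \<phi> t < M0"
    and I: "\<And>t. t \<in> {0..1} \<Longrightarrow> (gderiv \<phi> has_integral \<phi> t) {0..t}"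
    using Gamma1_facts[OF assms] by metis
  have "gderiv \<phi> integrable_on {0..1}" using I[of 1] by auto
  then have "gderiv \<phi> \<in> borel_measurable (lebesgue_on {0..1})"
    by (rule integrable_imp_measurable)
  moreover have "\<forall>x\<in>{0..1}. \<bar>gderiv \<phi> x\<bar> \<le> M0"
    using mM by (smt (verit))
  ultimately show ?thesis unfolding bm_def by auto
qed

lemma bm_pos_integral:
  assumes "bm f" "\<And>x. x \<in> {0..1} \<Longrightarrow> c \<le> f x"
  shows "c \<le> integral {0..1} f"
proof -
  have "integral {0..1} (\<lambda>x::real. c) \<le> integral {0..1} f"
    by (rule Henstock_Kurzweil_Integration.integral_le[OF bm_integrable[OF bm_const] bm_integrable[OF assms(1)]]) (use assms(2) in auto)
  then show ?thesis by simp
qed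

lemma bm_ae_zero:
  assumes "bm f" "\<And>x. x \<in> {0..1} \<Longrightarrow> 0 \<le> f x" "integral {0..1} f = 0"
  obtains N where "negligible N" "\<And>x. x \<in> {0..1} - N \<Longrightarrow> f x = 0"
proof -
  have li: "integrable (lebesgue_on {0..1}) f" using bm_lebesgue[OF assms(1)] .
  have "integral\<^sup>L (lebesgue_on {0..1}) f = 0"
    using lebesgue_integral_eq_integral[OF li] assms(3) by simp
  moreover have "AE x in lebesgue_on {0..1}. 0 \<le> f x"
    using assms(2) by (intro AE_I2) auto
  ultimately have "AE x in lebesgue_on {0..1}. f x = 0"
    using integral_nonneg_eq_0_iff_AE[OF li] by simp
  then obtain N where N: "{x \<in> space (lebesgue_on {0..1}). \<not> f x = 0} \<subseteq> N"
     "N \<in> null_sets (lebesgue_on {0..1})"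
    by (elim AE_E3) blast
  then have "N \<in> null_sets lebesgue" 
    using null_sets_restrict_space[of "{0..1::real}" lebesgue N] by auto
  then have "negligible N" by (simp add: negligible_iff_null_sets)
  moreover have "\<And>x. x \<in> {0..1} - N \<Longrightarrow> f x = 0" using N(1) by auto
  ultimately show ?thesis using that by blast
qed


lemma cos_int_has_integral:
  "((\<lambda>t. cos (2*pi*real_of_int n*t)) has_integral (if n = 0 then 1 else 0)) {0..1}"
proof (cases "n = 0")
  case True
  then show ?thesis using has_integral_const_real[of "1::real" 0 1] by simp
next
  case False
  have "((\<lambda>t. sin (2*pi*real_of_int n*t) / (2*pi*real_of_int n)) has_vector_derivative
        cos (2*pi*real_of_int n*x)) (at x within {0..1})" for x
    unfolding has_real_derivative_iff_has_vector_derivative[symmetric]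
    using False by (auto intro!: derivative_eq_intros)
  then have "((\<lambda>t. cos (2*pi*real_of_int n*t)) has_integral
      (sin (2*pi*real_of_int n*1) / (2*pi*real_of_int n) - sin (2*pi*real_of_int n*0) / (2*pi*real_of_int n))) {0..1}"
    by (intro fundamental_theorem_of_calculus) auto
  then show ?thesis using False by (simp add: sin_int_2pin)
qed

lemma sin_int_has_integral:
  "((\<lambda>t. sin (2*pi*real_of_int n*t)) has_integral 0) {0..1}"
proof (cases "n = 0")
  case True
  then show ?thesis by simp
next
  case False
  have "((\<lambda>t. - cos (2*pi*real_of_int n*t) / (2*pi*real_of_int n)) has_vector_derivative
        sin (2*pi*real_of_int n*x)) (at x within {0..1})" for x
    unfolding has_real_derivative_iff_has_vector_derivative[symmetric]
    using False by (auto intro!: derivative_eq_intros)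
  then have "((\<lambda>t. sin (2*pi*real_of_int n*t)) has_integral
      (- cos (2*pi*real_of_int n*1) / (2*pi*real_of_int n) - (- cos (2*pi*real_of_int n*0) / (2*pi*real_of_int n)))) {0..1}"
    by (intro fundamental_theorem_of_calculus) auto
  then show ?thesis using False by (simp add: cos_int_2pin)
qed

definition KK :: "nat \<Rightarrow> int" where "KK i = int ((i + 1) div 2)"

lemma fourier_e_alt:
  "fourier_e i t = sqrt 2 * (if odd i then cos (2*pi*real_of_int (KK i)*t) else sin (2*pi*real_of_int (KK i)*t))"
  unfolding fourier_e_def KK_def Let_def by simp

lemma KK_pos: "i \<ge> 1 \<Longrightarrow> KK i \<noteq> 0"
  unfolding KK_def by auto

lemma fourier_int: "i \<ge> 1 \<Longrightarrow> (fourier_e i has_integral 0) {0..1}"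
proof -
  assume i: "i \<ge> 1"
  have "((\<lambda>t. sqrt 2 * (if odd i then cos (2*pi*real_of_int (KK i)*t) else sin (2*pi*real_of_int (KK i)*t)))
     has_integral sqrt 2 * 0) {0..1}"
  proof (cases "odd i")
    case True
    then show ?thesis using has_integral_mult_right[OF cos_int_has_integral[of "KK i"]] KK_pos[OF i] by simp
  next
    case False
    then show ?thesis using has_integral_mult_right[OF sin_int_has_integral[of "KK i"]] by simp
  qed
  then show ?thesis unfolding fourier_e_alt[abs_def] by simp
qed

lemma KK_eq:
  assumes "i \<ge> 1" "j \<ge> 1" "odd i = odd j"
  shows "KK i = KK j \<longleftrightarrow> i = j"
  using assms unfolding KK_def by auto presburger+

lemma fourier_orth:
  assumes i: "i \<ge> 1" and j: "j \<ge> 1"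
  shows "((\<lambda>t. fourier_e i t * fourier_e j t) has_integral (if i = j then 1 else 0)) {0..1}"
proof -
  define k where "k = KK i"
  define l where "l = KK j"
  have kl: "k \<noteq> 0" "l \<noteq> 0" "k + l \<noteq> 0" using KK_pos[OF i] KK_pos[OF j] unfolding k_def l_def KK_def by auto
  have a1: "2*pi*real_of_int k*t - 2*pi*real_of_int l*t = 2*pi*real_of_int (k-l)*t" for t
    by (simp add: algebra_simps)
  have a2: "2*pi*real_of_int k*t + 2*pi*real_of_int l*t = 2*pi*real_of_int (k+l)*t" for t
    by (simp add: algebra_simps)
  have a3: "2*pi*real_of_int l*t + 2*pi*real_of_int k*t = 2*pi*real_of_int (k+l)*t" for t
    by (simp add: algebra_simps)
  have a4: "2*pi*real_of_int l*t - 2*pi*real_of_int k*t = 2*pi*real_of_int (l-k)*t" for t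
    by (simp add: algebra_simps)
  have s2: "sqrt 2 * sqrt 2 = (2::real)" by simp
  consider "odd i" "odd j" | "even i" "even j" | "odd i" "even j" | "even i" "odd j" by blast
  then show ?thesis
  proof cases
    case 1
    have eq: "fourier_e i t * fourier_e j t = cos (2*pi*real_of_int (k-l)*t) + cos (2*pi*real_of_int (k+l)*t)" for t
    proof -
      have "fourier_e i t * fourier_e j t = (sqrt 2 * sqrt 2) * (cos (2*pi*real_of_int k*t) * cos (2*pi*real_of_int l*t))"
        unfolding fourier_e_alt k_def[symmetric] l_def[symmetric] using 1 by (simp add: mult_ac)
      also have "\<dots> = cos (2*pi*real_of_int k*t - 2*pi*real_of_int l*t) + cos (2*pi*real_of_int k*t + 2*pi*real_of_int l*t)"
        by (simp only: s2 cos_times_cos) simp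
      also have "\<dots> = cos (2*pi*real_of_int (k-l)*t) + cos (2*pi*real_of_int (k+l)*t)"
        by (simp only: a1 a2)
      finally show ?thesis .
    qed
    have "((\<lambda>t. cos (2*pi*real_of_int (k-l)*t) + cos (2*pi*real_of_int (k+l)*t)) has_integral
       ((if k - l = 0 then 1 else 0) + (if k + l = 0 then 1 else 0))) {0..1}"
      by (intro has_integral_add cos_int_has_integral)
    moreover have "k - l = 0 \<longleftrightarrow> i = j" using KK_eq[OF i j] 1 unfolding k_def l_def by auto
    ultimately show ?thesis using kl unfolding eq by simp
  next
    case 2
    have eq: "fourier_e i t * fourier_e j t = cos (2*pi*real_of_int (k-l)*t) - cos (2*pi*real_of_int (k+l)*t)" for t
    proof -
      have "fourier_e i t * fourier_e j t = (sqrt 2 * sqrt 2) * (sin (2*pi*real_of_int k*t) * sin (2*pi*real_of_int l*t))"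
        unfolding fourier_e_alt k_def[symmetric] l_def[symmetric] using 2 by (simp add: mult_ac)
      also have "\<dots> = cos (2*pi*real_of_int k*t - 2*pi*real_of_int l*t) - cos (2*pi*real_of_int k*t + 2*pi*real_of_int l*t)"
        by (simp only: s2 sin_times_sin) simp
      also have "\<dots> = cos (2*pi*real_of_int (k-l)*t) - cos (2*pi*real_of_int (k+l)*t)"
        by (simp only: a1 a2)
      finally show ?thesis .
    qed
    have "((\<lambda>t. cos (2*pi*real_of_int (k-l)*t) - cos (2*pi*real_of_int (k+l)*t)) has_integral
       ((if k - l = 0 then 1 else 0) - (if k + l = 0 then 1 else 0))) {0..1}"
      by (intro has_integral_diff cos_int_has_integral)
    moreover have "k - l = 0 \<longleftrightarrow> i = j" using KK_eq[OF i j] 2 unfolding k_def l_def by auto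
    ultimately show ?thesis using kl unfolding eq by simp
  next
    case 3
    have eq: "fourier_e i t * fourier_e j t = sin (2*pi*real_of_int (k+l)*t) - sin (2*pi*real_of_int (k-l)*t)" for t
    proof -
      have "fourier_e i t * fourier_e j t = (sqrt 2 * sqrt 2) * (cos (2*pi*real_of_int k*t) * sin (2*pi*real_of_int l*t))"
        unfolding fourier_e_alt k_def[symmetric] l_def[symmetric] using 3 by (simp add: mult_ac)
      also have "\<dots> = sin (2*pi*real_of_int k*t + 2*pi*real_of_int l*t) - sin (2*pi*real_of_int k*t - 2*pi*real_of_int l*t)"
        by (simp only: s2 cos_times_sin) simp
      also have "\<dots> = sin (2*pi*real_of_int (k+l)*t) - sin (2*pi*real_of_int (k-l)*t)"
        by (simp only: a1 a2)
      finally show ?thesis .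
    qed
    have "((\<lambda>t. sin (2*pi*real_of_int (k+l)*t) - sin (2*pi*real_of_int (k-l)*t)) has_integral (0 - 0)) {0..1}"
      by (intro has_integral_diff sin_int_has_integral)
    moreover have "i \<noteq> j" using 3 by auto
    ultimately show ?thesis unfolding eq by simp
  next
    case 4
    have eq: "fourier_e i t * fourier_e j t = sin (2*pi*real_of_int (k+l)*t) + sin (2*pi*real_of_int (k-l)*t)" for t
    proof -
      have "fourier_e i t * fourier_e j t = (sqrt 2 * sqrt 2) * (sin (2*pi*real_of_int k*t) * cos (2*pi*real_of_int l*t))"
        unfolding fourier_e_alt k_def[symmetric] l_def[symmetric] using 4 by (simp add: mult_ac)
      also have "\<dots> = sin (2*pi*real_of_int k*t + 2*pi*real_of_int l*t) + sin (2*pi*real_of_int k*t - 2*pi*real_of_int l*t)"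
        by (simp only: s2 sin_times_cos) simp
      also have "\<dots> = sin (2*pi*real_of_int (k+l)*t) + sin (2*pi*real_of_int (k-l)*t)"
        by (simp only: a1 a2)
      finally show ?thesis .
    qed
    have "((\<lambda>t. sin (2*pi*real_of_int (k+l)*t) + sin (2*pi*real_of_int (k-l)*t)) has_integral (0 + 0)) {0..1}"
      by (intro has_integral_add sin_int_has_integral)
    moreover have "i \<noteq> j" using 4 by auto
    ultimately show ?thesis unfolding eq by simp
  qed
qed


lemma fourier_cont: "continuous_on A (fourier_e i)"
  unfolding fourier_e_alt[abs_def]
  by (cases "odd i") (auto intro!: continuous_intros)

lemma Ssum_cont: "continuous_on A (\<lambda>s. \<Sum>i=1..m. g i * fourier_e i s)"
  by (intro continuous_intros continuous_on_compose2[OF fourier_cont[of UNIV]]) auto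

lemma bm_fourier: "bm (fourier_e i)"
  by (rule bm_cont[OF fourier_cont])

lemma bm_S: "bm (\<lambda>s. \<Sum>i=1..m. g i * fourier_e i s)"
  by (rule bm_cont[OF Ssum_cont])

lemma S_int: "((\<lambda>s. \<Sum>i=1..m. g i * fourier_e i s) has_integral 0) {0..1}"
proof -
  have "((\<lambda>s. \<Sum>i=1..m. g i * fourier_e i s) has_integral (\<Sum>i=1..m. g i * 0)) {0..1}"
    by (intro has_integral_sum has_integral_mult_right fourier_int) auto
  then show ?thesis by simp
qed

lemma S_sq: "((\<lambda>s. (\<Sum>i=1..m. g i * fourier_e i s) * (\<Sum>i=1..m. g i * fourier_e i s))
    has_integral (\<Sum>i=1..m. (g i)\<^sup>2)) {0..1}"
proof -
  have "((\<lambda>s. \<Sum>i=1..m. \<Sum>j=1..m. (g i * g j) * (fourier_e i s * fourier_e j s)) has_integral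
     (\<Sum>i=1..m. \<Sum>j=1..m. (g i * g j) * (if i = j then 1 else 0))) {0..1}"
    by (intro has_integral_sum has_integral_mult_right fourier_orth) auto
  moreover have "(\<Sum>i=1..m. \<Sum>j=1..m. (g i * g j) * (if i = j then 1 else 0)) = (\<Sum>i=1..m. (g i)\<^sup>2)"
  proof (rule sum.cong[OF refl])
    fix i assume "i \<in> {1..m}"
    have "(\<Sum>j=1..m. (g i * g j) * (if i = j then 1 else 0)) = (\<Sum>j=1..m. if i = j then g i * g j else 0)"
      by (intro sum.cong) auto
    also have "\<dots> = (g i)\<^sup>2" using \<open>i \<in> {1..m}\<close> by (simp add: power2_eq_square)
    finally show "(\<Sum>j=1..m. (g i * g j) * (if i = j then 1 else 0)) = (g i)\<^sup>2" .
  qed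
  moreover have "(\<Sum>i=1..m. g i * fourier_e i s) * (\<Sum>i=1..m. g i * fourier_e i s) =
     (\<Sum>i=1..m. \<Sum>j=1..m. (g i * g j) * (fourier_e i s * fourier_e j s))" for s
    by (simp add: sum_product mult_ac)
  ultimately show ?thesis by simp
qed

lemma aS_int:
  assumes "bm a"
  shows "((\<lambda>s. a s * (\<Sum>i=1..m. g i * fourier_e i s)) has_integral
     (\<Sum>i=1..m. g i * integral {0..1} (\<lambda>s. a s * fourier_e i s))) {0..1}"
proof -
  have "((\<lambda>s. \<Sum>i=1..m. g i * (a s * fourier_e i s)) has_integral
     (\<Sum>i=1..m. g i * integral {0..1} (\<lambda>s. a s * fourier_e i s))) {0..1}"
    by (intro has_integral_sum has_integral_mult_right integrable_integral bm_integrable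
        bm_mult assms bm_fourier) auto
  moreover have "a s * (\<Sum>i=1..m. g i * fourier_e i s) = (\<Sum>i=1..m. g i * (a s * fourier_e i s))" for s
    by (simp add: sum_distrib_left mult_ac)
  ultimately show ?thesis by simp
qed

lemma var_formula:
  fixes a S :: "real \<Rightarrow> real"
  assumes hA: "(a has_integral A) {0..1}" and hA2: "((\<lambda>s. a s * a s) has_integral A2) {0..1}"
    and hS: "(S has_integral 0) {0..1}" and hAS: "((\<lambda>s. a s * S s) has_integral AS) {0..1}"
    and hSS: "((\<lambda>s. S s * S s) has_integral SS) {0..1}"
  shows "integral {0..1} (\<lambda>s. (a s + S s + c) * (a s + S s + c))
     - integral {0..1} (\<lambda>s. a s + S s + c) * integral {0..1} (\<lambda>s. a s + S s + c)
     = A2 - A * A + 2 * AS + SS"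
proof -
  have hc: "((\<lambda>s::real. c) has_integral c) {0..1}"
    using has_integral_const_real[of c 0 1] by simp
  have "((\<lambda>s. a s * a s + 2 * (a s * S s) + S s * S s + (2*c) * a s + (2*c) * S s + c * c)
     has_integral (A2 + 2 * AS + SS + (2*c) * A + (2*c) * 0 + c * c)) {0..1}"
    by (intro has_integral_add has_integral_mult_right hA hA2 hS hAS hSS hc)
  moreover have "(\<lambda>s. (a s + S s + c) * (a s + S s + c)) =
     (\<lambda>s. a s * a s + 2 * (a s * S s) + S s * S s + (2*c) * a s + (2*c) * S s + c * c)"
    by (rule ext) (simp add: algebra_simps)
  ultimately have 1: "integral {0..1} (\<lambda>s. (a s + S s + c) * (a s + S s + c)) = A2 + 2 * AS + SS + (2*c) * A + c * c"
    by (simp add: integral_unique)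
  have "((\<lambda>s. a s + S s + c) has_integral (A + 0 + c)) {0..1}"
    by (intro has_integral_add hA hS hc)
  then have 2: "integral {0..1} (\<lambda>s. a s + S s + c) = A + c"
    by (simp add: integral_unique)
  show ?thesis unfolding 1 2 by (simp add: algebra_simps)
qed


lemma bm_divc: "bm f \<Longrightarrow> bm (\<lambda>x. f x / c)"
  using bm_mult[of f "\<lambda>x. 1 / c"] bm_const[of "1/c"] by simp

lemma main_formula:
  fixes \<phi> \<phi>c :: "real \<Rightarrow> real" and G :: "nat \<Rightarrow> 'a \<Rightarrow> real"
  assumes phi: "\<phi> \<in> Gamma1" and phic: "\<phi>c \<in> Gamma1"
  defines "a \<equiv> \<lambda>s. ln (gderiv \<phi> s) - ln (gderiv \<phi>c s)"
  shows "gnorm_sq (gminus (wMZW \<phi> G m \<omega>) \<phi>c) =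
    (integral {0..1} (\<lambda>s. a s * a s) - integral {0..1} a * integral {0..1} a)
    + 2 * (\<Sum>i=1..m. G i \<omega> * integral {0..1} (\<lambda>s. a s * fourier_e i s)) + (\<Sum>i=1..m. (G i \<omega>)\<^sup>2)"
proof -
  define g where "g i = G i \<omega>" for i
  define S where "S = (\<lambda>s. \<Sum>i=1..m. g i * fourier_e i s)"
  define d where "d = gderiv \<phi>"
  define dc where "dc = gderiv \<phi>c"
  obtain m1 M1 where m1: "0 < m1" "\<And>t. t \<in> {0..1} \<Longrightarrow> m1 < d t \<and> d t < M1"
    using Gamma1_facts[OF phi] unfolding d_def by metis
  obtain m2 M2 where m2: "0 < m2" "\<And>t. t \<in> {0..1} \<Longrightarrow> m2 < dc t \<and> dc t < M2"
    using Gamma1_facts[OF phic] unfolding dc_def by metis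
  have bmd: "bm d" unfolding d_def by (rule bm_gderiv[OF phi])
  have bmdc: "bm dc" unfolding dc_def by (rule bm_gderiv[OF phic])
  have bmS: "bm S" unfolding S_def by (rule bm_S)
  obtain B where B: "\<And>x. x \<in> {0..1} \<Longrightarrow> \<bar>S x\<bar> \<le> B"
    using bmS unfolding bm_def by (auto simp: Ball_def)
  define q1 where "q1 = (\<lambda>s. d s * exp (S s))"
  have bmq1: "bm q1" unfolding q1_def
    by (intro bm_mult bmd bm_cont continuous_on_exp) (unfold S_def, rule Ssum_cont)
  have q1low: "m1 * exp (- B) \<le> q1 s" if s: "s \<in> {0..1}" for s
  proof -
    have "exp (- B) \<le> exp (S s)" using B[OF s] by auto
    then show ?thesis unfolding q1_def using m1(1) m1(2)[OF s] by (intro mult_mono) auto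
  qed
  define Z where "Z = integral {0..1} q1"
  have Zpos: "Z > 0"
    using bm_pos_integral[OF bmq1 q1low] m1(1) unfolding Z_def
    by (smt (verit) exp_gt_zero mult_pos_pos)
  define wf where "wf = (\<lambda>t. integral {0..t} q1 / Z)"
  have w: "wMZW \<phi> G m \<omega> = wf"
    unfolding wMZW_def wf_def q1_def Z_def S_def g_def d_def by simp
  obtain N1 where N1: "negligible N1" "\<And>t. t \<in> {0..1} - N1 \<Longrightarrow> gderiv wf t = q1 t / Z"
    using gderiv_integral_ae[OF bm_integrable[OF bmq1], of Z] unfolding wf_def by metis
  define r where "r = (\<lambda>s. gderiv \<phi>c s powr -1)"
  define r' where "r' = (\<lambda>s. 1 / dc s)"
  have rr: "r s = r' s" if "s \<in> {0..1}" for s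
    using m2(1) m2(2)[OF that] unfolding r_def r'_def dc_def by (simp add: powr_minus divide_inverse)
  have bmr': "bm r'" unfolding r'_def
    using m2 by (intro bm_inverse[OF bmdc, of m2]) (auto simp: less_imp_le)
  have rint: "r integrable_on {0..1}"
    using integrable_eq[OF bm_integrable[OF bmr'], of r] rr by auto
  define C where "C = integral {0..1} r"
  have Cr': "C = integral {0..1} r'" unfolding C_def by (rule integral_cong) (simp add: rr)
  have r'low: "1 / M2 \<le> r' s" if s: "s \<in> {0..1}" for s
    using m2(1) m2(2)[OF s] unfolding r'_def by (simp add: frac_le)
  have M2pos: "M2 > 0" using m2(1) m2(2)[of 0] by auto
  have Cpos: "C > 0"
    using bm_pos_integral[OF bmr' r'low] M2pos unfolding Cr' by (smt (verit) divide_pos_pos)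
  define gf where "gf = (\<lambda>t. integral {0..t} r / C)"
  have gs: "gscale (-1) \<phi>c = gf"
    unfolding gscale_def gf_def r_def C_def by simp
  obtain N2 where N2: "negligible N2" "\<And>t. t \<in> {0..1} - N2 \<Longrightarrow> gderiv gf t = r t / C"
    using gderiv_integral_ae[OF rint, of C] unfolding gf_def by metis
  define q where "q = (\<lambda>s. gderiv wf s * gderiv gf s)"
  define k where "k = (\<lambda>s. q1 s / Z * (r' s / C))"
  have bmk: "bm k" unfolding k_def by (intro bm_mult bm_divc bmq1 bmr')
  have qk: "q s = k s" if "s \<in> {0..1} - (N1 \<union> N2)" for s
    using N1(2)[of s] N2(2)[of s] rr[of s] that unfolding q_def k_def by auto
  have negN12: "negligible (N1 \<union> N2)" using N1 N2 by auto
  have qint: "q integrable_on {0..1}"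
    by (rule integrable_spike[OF bm_integrable[OF bmk] negN12]) (use qk in auto)
  define D where "D = integral {0..1} q"
  have Dk: "D = integral {0..1} k" unfolding D_def
    by (rule integral_spike[OF negN12]) (use qk in auto)
  have klow: "m1 * exp (- B) / Z * (1 / M2 / C) \<le> k s" if s: "s \<in> {0..1}" for s
    unfolding k_def using Zpos Cpos q1low[OF s] r'low[OF s] m1(1) M2pos
    by (intro mult_mono divide_right_mono) (auto intro!: divide_nonneg_pos order.trans[OF _ q1low[OF s]])
  have Dpos: "D > 0"
    using bm_pos_integral[OF bmk klow] unfolding Dk
    by (smt (verit) Cpos M2pos Zpos divide_pos_pos exp_gt_zero m1(1) mult_pos_pos)
  define u where "u = (\<lambda>t. integral {0..t} q / D)"
  have gm: "gminus (wMZW \<phi> G m \<omega>) \<phi>c = u"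
    unfolding gminus_def w gs gplus_def u_def D_def q_def by simp
  obtain N3 where N3: "negligible N3" "\<And>t. t \<in> {0..1} - N3 \<Longrightarrow> gderiv u t = q t / D"
    using gderiv_integral_ae[OF qint, of D] unfolding u_def by metis
  define c0 where "c0 = - ln (Z * C * D)"
  define l where "l = (\<lambda>s. a s + S s + c0)"
  have negN: "negligible (N1 \<union> N2 \<union> N3)" using N1 N2 N3 by auto
  have lnu: "ln (gderiv u t) = l t" if t: "t \<in> {0..1} - (N1 \<union> N2 \<union> N3)" for t
  proof -
    have gt: "gderiv u t = k t / D" using N3(2)[of t] qk[of t] t by auto
    have dpos: "d t > 0" "dc t > 0" using m1 m2 t by (smt (verit) DiffD1)+
    have "exp (l t) = d t / dc t * exp (S t) * inverse (Z * C * D)"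
      unfolding l_def a_def c0_def d_def[symmetric] dc_def[symmetric]
      using dpos Zpos Cpos Dpos by (simp add: exp_add exp_diff exp_minus field_simps)
    also have "\<dots> = k t / D"
      unfolding k_def q1_def r'_def using dpos Zpos Cpos Dpos by (simp add: field_simps)
    finally show ?thesis using gt by (metis ln_exp)
  qed
  have bma: "bm a" unfolding a_def d_def[symmetric] dc_def[symmetric]
    using m1 m2 by (intro bm_diff bm_ln[OF bmd, of m1] bm_ln[OF bmdc, of m2]) (auto simp: less_imp_le)
  have "gnorm_sq (gminus (wMZW \<phi> G m \<omega>) \<phi>c) =
     integral {0..1} (\<lambda>s. l s * l s) - integral {0..1} l * integral {0..1} l"
  proof -
    have e1: "integral {0..1} (\<lambda>s. ln (gderiv u s) * ln (gderiv u s)) = integral {0..1} (\<lambda>s. l s * l s)"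
      by (rule integral_spike[OF negN]) (use lnu in auto)
    have e2: "integral {0..1} (\<lambda>s. ln (gderiv u s)) = integral {0..1} l"
      by (rule integral_spike[OF negN]) (use lnu in auto)
    show ?thesis unfolding gm gnorm_sq_def ginner_def e1 e2 ..
  qed
  also have "\<dots> = integral {0..1} (\<lambda>s. a s * a s) - integral {0..1} a * integral {0..1} a
     + 2 * (\<Sum>i=1..m. g i * integral {0..1} (\<lambda>s. a s * fourier_e i s)) + (\<Sum>i=1..m. (g i)\<^sup>2)"
  proof -
    have hS: "(S has_integral 0) {0..1}" unfolding S_def by (rule S_int)
    have hSS: "((\<lambda>s. S s * S s) has_integral (\<Sum>i=1..m. (g i)\<^sup>2)) {0..1}"
      unfolding S_def by (rule S_sq)
    have hAS: "((\<lambda>s. a s * S s) has_integral (\<Sum>i=1..m. g i * integral {0..1} (\<lambda>s. a s * fourier_e i s))) {0..1}"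
      unfolding S_def by (rule aS_int[OF bma])
    show ?thesis unfolding l_def
      by (rule var_formula[OF integrable_integral[OF bm_integrable[OF bma]]
          integrable_integral[OF bm_integrable[OF bm_mult[OF bma bma]]] hS hAS hSS])
  qed
  finally show ?thesis unfolding g_def .
qed


lemma expect_formula:
  fixes M :: "'a measure" and G :: "nat \<Rightarrow> 'a \<Rightarrow> real"
  assumes P: "prob_space M"
    and meas: "\<forall>i\<in>{1..m}. G i \<in> borel_measurable M"
    and sq: "\<forall>i\<in>{1..m}. integrable M (\<lambda>x. (G i x)\<^sup>2)"
    and mean: "\<forall>i\<in>{1..m}. (\<integral>x. G i x \<partial>M) = 0"
    and var: "\<forall>i\<in>{1..m}. (\<integral>x. (G i x - (\<integral>y. G i y \<partial>M))\<^sup>2 \<partial>M) = v i / (1 + \<theta>)"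
  shows "integrable M (\<lambda>\<omega>. K + 2 * (\<Sum>i=1..m. G i \<omega> * c i) + (\<Sum>i=1..m. (G i \<omega>)\<^sup>2))"
    and "(\<integral>\<omega>. K + 2 * (\<Sum>i=1..m. G i \<omega> * c i) + (\<Sum>i=1..m. (G i \<omega>)\<^sup>2) \<partial>M)
          = K + (\<Sum>i=1..m. v i / (1 + \<theta>))"
proof -
  have FM: "finite_measure M" using P unfolding prob_space_def by auto
  have iG: "integrable M (G i)" if "i \<in> {1..m}" for i
    using finite_measure.square_integrable_imp_integrable[OF FM] meas sq that by blast
  have iG2: "integrable M (\<lambda>x. (G i x)\<^sup>2)" if "i \<in> {1..m}" for i using sq that by blast
  have i1: "integrable M (\<lambda>\<omega>. \<Sum>i=1..m. G i \<omega> * c i)"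
    using iG by (intro Bochner_Integration.integrable_sum integrable_mult_left) auto
  have i2: "integrable M (\<lambda>\<omega>. \<Sum>i=1..m. (G i \<omega>)\<^sup>2)"
    using iG2 by (intro Bochner_Integration.integrable_sum) auto
  have i0: "integrable M (\<lambda>\<omega>. K)" by (rule finite_measure.integrable_const[OF FM])
  show I: "integrable M (\<lambda>\<omega>. K + 2 * (\<Sum>i=1..m. G i \<omega> * c i) + (\<Sum>i=1..m. (G i \<omega>)\<^sup>2))"
    using i0 i1 i2 by (intro Bochner_Integration.integrable_add integrable_mult_right) auto
  have e0: "(\<integral>\<omega>. K \<partial>M) = K" using prob_space.prob_space[OF P] by simp
  have e1: "(\<integral>\<omega>. (\<Sum>i=1..m. G i \<omega> * c i) \<partial>M) = 0"
    using iG mean by (subst Bochner_Integration.integral_sum) auto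
  have e2: "(\<integral>\<omega>. (\<Sum>i=1..m. (G i \<omega>)\<^sup>2) \<partial>M) = (\<Sum>i=1..m. v i / (1 + \<theta>))"
    using iG2 mean var by (subst Bochner_Integration.integral_sum) auto
  show "(\<integral>\<omega>. K + 2 * (\<Sum>i=1..m. G i \<omega> * c i) + (\<Sum>i=1..m. (G i \<omega>)\<^sup>2) \<partial>M)
          = K + (\<Sum>i=1..m. v i / (1 + \<theta>))"
    using i0 i1 i2 e0 e1 e2
    by (subst Bochner_Integration.integral_add, auto intro!: Bochner_Integration.integrable_add integrable_mult_right)
qed

lemma centered_sq:
  assumes "bm a"
  shows "((\<lambda>s. (a s - integral {0..1} a) * (a s - integral {0..1} a)) has_integral
     (integral {0..1} (\<lambda>s. a s * a s) - integral {0..1} a * integral {0..1} a)) {0..1}"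
proof -
  define A where "A = integral {0..1} a"
  have hA: "(a has_integral A) {0..1}" unfolding A_def
    by (rule integrable_integral[OF bm_integrable[OF assms]])
  have hA2: "((\<lambda>s. a s * a s) has_integral integral {0..1} (\<lambda>s. a s * a s)) {0..1}"
    by (rule integrable_integral[OF bm_integrable[OF bm_mult[OF assms assms]]])
  have hc: "((\<lambda>s::real. A * A) has_integral A * A) {0..1}"
    using has_integral_const_real[of "A*A" 0 1] by simp
  have "((\<lambda>s. a s * a s - (2 * A) * a s + A * A) has_integral
     (integral {0..1} (\<lambda>s. a s * a s) - (2 * A) * A + A * A)) {0..1}"
    by (intro has_integral_add has_integral_diff has_integral_mult_left has_integral_mult_right hA hA2 hc)
  moreover have "(\<lambda>s. a s * a s - (2 * A) * a s + A * A) = (\<lambda>s. (a s - A) * (a s - A))"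
    by (rule ext) (simp add: algebra_simps)
  ultimately show ?thesis unfolding A_def[symmetric] by (simp add: algebra_simps)
qed

lemma K_nonneg:
  assumes "bm a"
  shows "0 \<le> integral {0..1} (\<lambda>s. a s * a s) - integral {0..1} a * integral {0..1} a"
  using has_integral_nonneg[OF centered_sq[OF assms]] by simp

lemma K_zero:
  assumes phi: "\<phi> \<in> Gamma1" and phic: "\<phi>c \<in> Gamma1"
    and a_def: "a = (\<lambda>s. ln (gderiv \<phi> s) - ln (gderiv \<phi>c s))"
    and K0: "integral {0..1} (\<lambda>s. a s * a s) - integral {0..1} a * integral {0..1} a = 0"
  shows "\<forall>t\<in>{0..1}. \<phi>c t = \<phi> t"
proof -
  define d where "d = gderiv \<phi>"
  define dc where "dc = gderiv \<phi>c"
  obtain m1 M1 where m1: "0 < m1" "\<And>t. t \<in> {0..1} \<Longrightarrow> m1 < d t \<and> d t < M1"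
    and I1: "\<And>t. t \<in> {0..1} \<Longrightarrow> (d has_integral \<phi> t) {0..t}" and p1: "\<phi> 1 = 1"
    using Gamma1_facts[OF phi] unfolding d_def by metis
  obtain m2 M2 where m2: "0 < m2" "\<And>t. t \<in> {0..1} \<Longrightarrow> m2 < dc t \<and> dc t < M2"
    and I2: "\<And>t. t \<in> {0..1} \<Longrightarrow> (dc has_integral \<phi>c t) {0..t}" and p2: "\<phi>c 1 = 1"
    using Gamma1_facts[OF phic] unfolding dc_def by metis
  have bmd: "bm d" unfolding d_def by (rule bm_gderiv[OF phi])
  have bmdc: "bm dc" unfolding dc_def by (rule bm_gderiv[OF phic])
  have bma: "bm a" unfolding a_def d_def[symmetric] dc_def[symmetric]
    using m1 m2 by (intro bm_diff bm_ln[OF bmd, of m1] bm_ln[OF bmdc, of m2]) (auto simp: less_imp_le)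
  define A where "A = integral {0..1} a"
  have "integral {0..1} (\<lambda>s. (a s - A) * (a s - A)) = 0"
    using integral_unique[OF centered_sq[OF bma]] K0 unfolding A_def by simp
  moreover have bmf: "bm (\<lambda>s. (a s - A) * (a s - A))" by (intro bm_mult bm_diff bma bm_const)
  ultimately obtain N where N: "negligible N" "\<And>x. x \<in> {0..1} - N \<Longrightarrow> (a x - A) * (a x - A) = 0"
    using bm_ae_zero[OF bmf] by (metis zero_le_square)
  have dA: "d s = exp A * dc s" if s: "s \<in> {0..1} - N" for s
  proof -
    have "a s = A" using N(2)[OF s] by simp
    then have "ln (d s) = A + ln (dc s)" unfolding a_def d_def dc_def by simp
    then have "exp (ln (d s)) = exp A * exp (ln (dc s))" by (simp add: exp_add)
    moreover have "d s > 0" "dc s > 0" using m1 m2 s by (smt (verit) DiffD1)+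
    ultimately show ?thesis by simp
  qed
  have "1 = integral {0..1} d" using I1[of 1] p1 by (simp add: integral_unique)
  also have "\<dots> = integral {0..1} (\<lambda>s. exp A * dc s)"
    by (rule integral_spike[OF N(1)]) (use dA in auto)
  also have "\<dots> = exp A * integral {0..1} dc" by simp
  also have "\<dots> = exp A" using I2[of 1] p2 by (simp add: integral_unique)
  finally have eA: "exp A = 1" by simp
  show ?thesis
  proof
    fix t :: real assume t: "t \<in> {0..1}"
    have "\<phi> t = integral {0..t} d" using I1[OF t] by (simp add: integral_unique)
    also have "\<dots> = integral {0..t} dc"
      by (rule integral_spike[OF N(1)]) (use dA eA t in auto)
    also have "\<dots> = \<phi>c t" using I2[OF t] by (simp add: integral_unique)
    finally show "\<phi>c t = \<phi> t" by simp
  qed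
qed


theorem proposition2:
  fixes M :: "'a measure" and m :: nat and \<theta> :: real and \<phi> :: "real \<Rightarrow> real"
    and v :: "nat \<Rightarrow> real" and G :: "nat \<Rightarrow> 'a \<Rightarrow> real"
  assumes "prob_space M"
    and "m \<ge> 1" and "\<theta> > 0" and "\<phi> \<in> Gamma1"
    and "\<forall>i\<ge>1. v i > 0" and "summable v"
    and "\<forall>i\<in>{1..m}. G i \<in> borel_measurable M"
    and "\<forall>i\<in>{1..m}. integrable M (\<lambda>x. (G i x)\<^sup>2)"
    and "\<forall>i\<in>{1..m}. (\<integral>x. G i x \<partial>M) = 0"
    and "\<forall>i\<in>{1..m}. (\<integral>x. (G i x - (\<integral>y. G i y \<partial>M))\<^sup>2 \<partial>M) = v i / (1 + \<theta>)"
  shows "(\<forall>\<phi>c\<in>Gamma1. integrable M (\<lambda>\<omega>. gnorm_sq (gminus (wMZW \<phi> G m \<omega>) \<phi>c)))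
    \<and> (\<forall>\<phi>c\<in>Gamma1. (\<forall>t\<in>{0..1}. \<phi>c t = \<phi> t)
          \<or> (\<integral>\<omega>. gnorm_sq (gminus (wMZW \<phi> G m \<omega>) \<phi>) \<partial>M)
              < (\<integral>\<omega>. gnorm_sq (gminus (wMZW \<phi> G m \<omega>) \<phi>c) \<partial>M))
    \<and> (\<integral>\<omega>. gnorm_sq (gminus (wMZW \<phi> G m \<omega>) \<phi>) \<partial>M)
        = (\<integral>\<omega>. l2_norm_sq (\<lambda>t. Xm \<phi> G m \<omega> t - psi \<phi> t) \<partial>M)
    \<and> (\<integral>\<omega>. l2_norm_sq (\<lambda>t. Xm \<phi> G m \<omega> t - psi \<phi> t) \<partial>M)
        = (1 / (1 + \<theta>)) * (\<Sum>i=1..m. v i)"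
proof -
  note P = assms(1) and phi = assms(4)
  note EF = expect_formula[OF assms(1) assms(7) assms(8) assms(9) assms(10)]
  define aF where "aF \<phi>c = (\<lambda>s. ln (gderiv \<phi> s) - ln (gderiv \<phi>c s))" for \<phi>c
  define Kf where "Kf \<phi>c = integral {0..1} (\<lambda>s. aF \<phi>c s * aF \<phi>c s) - integral {0..1} (aF \<phi>c) * integral {0..1} (aF \<phi>c)" for \<phi>c
  define cf where "cf \<phi>c i = integral {0..1} (\<lambda>s. aF \<phi>c s * fourier_e i s)" for \<phi>c i
  define V where "V = (\<Sum>i=1..m. v i / (1 + \<theta>))"
  have mf: "(\<lambda>\<omega>. gnorm_sq (gminus (wMZW \<phi> G m \<omega>) \<phi>c)) =
     (\<lambda>\<omega>. Kf \<phi>c + 2 * (\<Sum>i=1..m. G i \<omega> * cf \<phi>c i) + (\<Sum>i=1..m. (G i \<omega>)\<^sup>2))"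
    if "\<phi>c \<in> Gamma1" for \<phi>c
    unfolding Kf_def cf_def aF_def by (rule ext) (rule main_formula[OF phi that])
  have Kphi: "Kf \<phi> = 0" and cphi: "cf \<phi> i = 0" for i
    unfolding Kf_def cf_def aF_def by simp_all
  have E: "integrable M (\<lambda>\<omega>. gnorm_sq (gminus (wMZW \<phi> G m \<omega>) \<phi>c))"
    "(\<integral>\<omega>. gnorm_sq (gminus (wMZW \<phi> G m \<omega>) \<phi>c) \<partial>M) = Kf \<phi>c + V"
    if "\<phi>c \<in> Gamma1" for \<phi>c
    unfolding mf[OF that] V_def using EF by auto
  have Ephi: "(\<integral>\<omega>. gnorm_sq (gminus (wMZW \<phi> G m \<omega>) \<phi>) \<partial>M) = V"
    using E(2)[OF phi] Kphi by simp
  have l2: "(\<lambda>\<omega>. l2_norm_sq (\<lambda>t. Xm \<phi> G m \<omega> t - psi \<phi> t)) =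
     (\<lambda>\<omega>. 0 + 2 * (\<Sum>i=1..m. G i \<omega> * 0) + (\<Sum>i=1..m. (G i \<omega>)\<^sup>2))"
  proof (rule ext)
    fix \<omega>
    have "l2_norm_sq (\<lambda>t. Xm \<phi> G m \<omega> t - psi \<phi> t) =
       integral {0..1} (\<lambda>s. (\<Sum>i=1..m. G i \<omega> * fourier_e i s) * (\<Sum>i=1..m. G i \<omega> * fourier_e i s))"
      unfolding l2_norm_sq_def Xm_def by (simp add: power2_eq_square)
    also have "\<dots> = (\<Sum>i=1..m. (G i \<omega>)\<^sup>2)"
      by (rule integral_unique[OF S_sq])
    finally show "l2_norm_sq (\<lambda>t. Xm \<phi> G m \<omega> t - psi \<phi> t) =
       0 + 2 * (\<Sum>i=1..m. G i \<omega> * 0) + (\<Sum>i=1..m. (G i \<omega>)\<^sup>2)" by simp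
  qed
  have El2: "(\<integral>\<omega>. l2_norm_sq (\<lambda>t. Xm \<phi> G m \<omega> t - psi \<phi> t) \<partial>M) = V"
    unfolding l2 V_def using EF(2)[of 0 "\<lambda>_. 0"] by simp
  have uniq: "(\<forall>t\<in>{0..1}. \<phi>c t = \<phi> t)
          \<or> (\<integral>\<omega>. gnorm_sq (gminus (wMZW \<phi> G m \<omega>) \<phi>) \<partial>M)
              < (\<integral>\<omega>. gnorm_sq (gminus (wMZW \<phi> G m \<omega>) \<phi>c) \<partial>M)"
    if phic: "\<phi>c \<in> Gamma1" for \<phi>c
  proof (cases "Kf \<phi>c = 0")
    case True
    then show ?thesis using K_zero[OF phi phic aF_def[of \<phi>c]] unfolding Kf_def by auto
  next
    case False
    obtain m1 M1 where m1: "0 < m1" "\<And>t. t \<in> {0..1} \<Longrightarrow> m1 < gderiv \<phi> t \<and> gderiv \<phi> t < M1"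
      using Gamma1_facts[OF phi] by metis
    obtain m2 M2 where m2: "0 < m2" "\<And>t. t \<in> {0..1} \<Longrightarrow> m2 < gderiv \<phi>c t \<and> gderiv \<phi>c t < M2"
      using Gamma1_facts[OF phic] by metis
    have bma: "bm (aF \<phi>c)" unfolding aF_def
      using m1 m2 by (intro bm_diff bm_ln[OF bm_gderiv[OF phi], of m1] bm_ln[OF bm_gderiv[OF phic], of m2])
        (auto simp: less_imp_le)
    have "Kf \<phi>c > 0" using K_nonneg[OF bma] False unfolding Kf_def by linarith
    then show ?thesis using E(2)[OF phic] Ephi by auto
  qed
  have fin: "V = (1 / (1 + \<theta>)) * (\<Sum>i=1..m. v i)"
    unfolding V_def by (simp add: sum_divide_distrib)
  show ?thesis using E(1) uniq Ephi El2 fin by auto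
qed

end
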